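(* Let $\pi:\mathbb R^n\times[0,\infty]\to[0,\infty]$ be a price function such that there is a function $f:\mathbb R^n\to[0,\infty)$ with $\pi(\mathbf q,v)=f(\mathbf q)^2/v$ for all $\mathbf q\in\mathbb R^n$, $v\in[0,\infty]$. Then $\pi$ is arbitrage-free if and only if $f$ is a semi-norm, i.e. $f(c\mathbf q)=|c|f(\mathbf q)$ for all $c\in\mathbb R$, $\mathbf q\in\mathbb R^n$, and $f(\mathbf q_1+\mathbf q_2)\le f(\mathbf q_1)+f(\mathbf q_2)$ for all $\mathbf q_1,\mathbf q_2\in\mathbb R^n$.
   Context: Conventions: $a/0=\infty$ for $a>0$, $0/0=0$, $a/\infty=0$, and $0\cdot\infty=0$. A query is a pair $(\mathbf q,v)$ with $\mathbf q\in\mathbb R^n$ and $v\in[0,\infty]$. The determinacy relation $\mathbf S\rightarrow\mathbf Q$ between finite multisets of queries and queries is the smallest relation satisfying: (Summation) for every $k\ge 0$, $\{(\mathbf q_1,v_1),\ldots,(\mathbf q_k,v_k)\}\rightarrow(\mathbf q_1+\cdots+\mathbf q_k,\,v_1+\cdots+v_k)$; (Scalar multiplication) for every $c\in\mathbb R$, $\{(\mathbf q,v)\}\rightarrow(c\mathbf q,c^2v)$; (Relaxation) $\{(\mathbf q,v)\}\rightarrow(\mathbf q,v')$ whenever $v\le v'$; (Transitivity) if $\mathbf S_1\rightarrow\mathbf Q_1,\ldots,\mathbf S_k\rightarrow\mathbf Q_k$ and $\{\mathbf Q_1,\ldots,\mathbf Q_k\}\rightarrow\mathbf Q$, then $\mathbf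 S_1\uplus\cdots\uplus\mathbf S_k\rightarrow\mathbf Q$. A price function $\pi$ is arbitrage-free if for every $m\ge 1$ and queries $\mathbf Q_1,\ldots,\mathbf Q_m,\mathbf Q$ with $\{\mathbf Q_1,\ldots,\mathbf Q_m\}\rightarrow\mathbf Q$ we have $\pi(\mathbf Q)\le\sum_{i=1}^m\pi(\mathbf Q_i)$. *)

theory Defs
  imports "HOL-Analysis.Analysis" "HOL-Library.Multiset" "HOL-Library.Extended_Nonnegative_Real"
begin

text \<open>A query is a pair (q, v) with q in R^n and v in [0,\<infinity>]; values live in ennreal,
whose arithmetic realizes the conventions a/0 = \<infinity> (a>0), 0/0 = 0, a/\<infinity> = 0, 0\<cdot>\<infinity> = 0.\<close>

type_synonym 'n query = "(real ^ 'n) \<times> ennreal"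

inductive determines :: "('n::finite) query multiset \<Rightarrow> 'n query \<Rightarrow> bool" where
  summation: "determines S (sum_mset (image_mset fst S), sum_mset (image_mset snd S))"
| scalar: "determines {#(q, v)#} (c *\<^sub>R q, ennreal (c\<^sup>2) * v)"
| relax: "v \<le> v' \<Longrightarrow> determines {#(q, v)#} (q, v')"
| trans: "\<lbrakk>\<forall>p \<in> set ps. determines (fst p) (snd p);
           determines (mset (map snd ps)) Q\<rbrakk>
          \<Longrightarrow> determines (sum_list (map fst ps)) Q"

definition arbitrage_free :: "(('n::finite) query \<Rightarrow> ennreal) \<Rightarrow> bool" where
  "arbitrage_free \<pi> \<longleftrightarrow>
     (\<forall>M Q. M \<noteq> {#} \<longrightarrow> determines M Q \<longrightarrow> \<pi> Q \<le> sum_mset (image_mset \<pi> M))"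

end

theory Submission
  imports Defs
begin

lemma inv_anti: "(v::ennreal) \<le> v' \<Longrightarrow> inverse v' \<le> inverse v"
proof (cases "v = 0 \<or> v' = top")
  case True thus ?thesis by auto
next
  case False
  assume le: "v \<le> v'"
  obtain a where a: "v = ennreal a" "a \<ge> 0" using False le by (cases v rule: ennreal_cases) (auto simp: top_unique)
  obtain b where b: "v' = ennreal b" "b \<ge> 0" using False by (cases v' rule: ennreal_cases) auto
  have ap: "a > 0" using a False by (auto simp: less_le)
  have "a \<le> b" using le a b by simp
  then show ?thesis using a b ap by (simp add: inverse_ennreal ennreal_leI le_imp_inverse_le)
qed

lemma div_anti: "(v::ennreal) \<le> v' \<Longrightarrow> x / v' \<le> x / v"
  unfolding divide_ennreal_def by (intro mult_left_mono inv_anti) auto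

lemma titu:
  fixes x y :: real and v w :: ennreal
  assumes "x \<ge> 0" "y \<ge> 0"
  shows "ennreal ((x+y)^2) / (v+w) \<le> ennreal (x^2) / v + ennreal (y^2) / w"
proof (cases "v = top \<or> w = top")
  case True thus ?thesis by (auto simp: ennreal_divide_top)
next
  case False
  obtain a where a: "v = ennreal a" "a \<ge> 0" using False by (cases v rule: ennreal_cases) auto
  obtain b where b: "w = ennreal b" "b \<ge> 0" using False by (cases w rule: ennreal_cases) auto
  show ?thesis
  proof (cases "a = 0 \<or> b = 0")
    case True
    show ?thesis
    proof (cases "a = 0")
      case True
      hence v0: "v = 0" using a by simp
      show ?thesis
      proof (cases "x = 0")
        case True thus ?thesis using v0 by (simp add: ennreal_divide_zero)
      next
        case False
        hence "ennreal (x^2) / v = top" using v0 by (simp add: ennreal_divide_zero)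
        thus ?thesis by simp
      qed
    next
      case False
      hence w0: "w = 0" using b \<open>a = 0 \<or> b = 0\<close> by simp
      show ?thesis
      proof (cases "y = 0")
        case True thus ?thesis using w0 by (simp add: ennreal_divide_zero)
      next
        case False
        hence "ennreal (y^2) / w = top" using w0 by (simp add: ennreal_divide_zero)
        thus ?thesis by simp
      qed
    qed
  next
    case False
    hence ap: "a > 0" and bp: "b > 0" using a b by auto
    have "(x+y)^2/(a+b) \<le> x^2/a + y^2/b"
    proof -
      have "(x+y)^2 * (a*b) \<le> (x^2*b + y^2*a) * (a+b)"
      proof -
        have "(x^2*b + y^2*a)*(a+b) - (x+y)^2*(a*b) = (x*b - y*a)^2"
          by (simp add: power2_eq_square algebra_simps)
        moreover have "0 \<le> (x*b - y*a)^2" by simp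
        ultimately show ?thesis by linarith
      qed
      hence "(x+y)^2 \<le> (x^2*b + y^2*a) * (a+b) / (a*b)" using ap bp by (subst pos_le_divide_eq) auto
      also have "\<dots> = (x^2/a + y^2/b) * (a+b)" using ap bp by (simp add: divide_simps)
      finally show ?thesis using ap bp by (subst pos_divide_le_eq) auto
    qed
    hence "ennreal ((x+y)^2/(a+b)) \<le> ennreal (x^2/a + y^2/b)" by (rule ennreal_leI)
    moreover have "ennreal a + ennreal b = ennreal (a+b)" using a b by (simp add: ennreal_plus)
    moreover have "ennreal ((x+y)^2) / ennreal (a+b) = ennreal ((x+y)^2/(a+b))"
      using ap bp by (intro divide_ennreal) auto
    moreover have "ennreal (x^2) / ennreal a = ennreal (x^2/a)" using ap by (intro divide_ennreal) auto
    moreover have "ennreal (y^2) / ennreal b = ennreal (y^2/b)" using bp by (intro divide_ennreal) auto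
    moreover have "ennreal (x^2/a + y^2/b) = ennreal (x^2/a) + ennreal (y^2/b)"
      using ap bp by (intro ennreal_plus) auto
    ultimately show ?thesis using a b by metis
  qed
qed

lemma sum_mset_nonneg_real: "(\<forall>x. (g x::real) \<ge> 0) \<Longrightarrow> sum_mset (image_mset g S) \<ge> 0"
  by (induction S) auto

lemma backward:
  fixes \<pi> :: "'n::finite query \<Rightarrow> ennreal" and f :: "real ^ 'n \<Rightarrow> real"
  assumes nn: "\<forall>q. f q \<ge> 0"
    and price: "\<forall>q v. \<pi> (q, v) = ennreal ((f q)\<^sup>2) / v"
    and hom: "\<forall>c q. f (c *\<^sub>R q) = \<bar>c\<bar> * f q"
    and tri: "\<forall>q1 q2. f (q1 + q2) \<le> f q1 + f q2"
  shows "determines M Q \<Longrightarrow> \<pi> Q \<le> sum_mset (image_mset \<pi> M)"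
proof (induction rule: determines.induct)
  case (summation S)
  have f0: "f 0 = 0" using hom[rule_format, of 0 0] by simp
  have fs: "f (sum_mset (image_mset fst S)) \<le> sum_mset (image_mset (\<lambda>x. f (fst x)) S)"
  proof (induction S)
    case empty thus ?case using f0 by simp
  next
    case (add x S)
    have "f (fst x + sum_mset (image_mset fst S)) \<le> f (fst x) + f (sum_mset (image_mset fst S))"
      using tri by blast
    thus ?case using add by simp
  qed
  have ts: "ennreal ((sum_mset (image_mset (\<lambda>x. f (fst x)) S))^2) / sum_mset (image_mset snd S)
      \<le> sum_mset (image_mset \<pi> S)"
  proof (induction S)
    case empty thus ?case by (simp add: ennreal_divide_zero)
  next
    case (add x S)
    let ?A = "sum_mset (image_mset (\<lambda>x. f (fst x)) S)"
    have A0: "?A \<ge> 0" using nn by (intro sum_mset_nonneg_real) auto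
    have "ennreal ((f (fst x) + ?A)^2) / (snd x + sum_mset (image_mset snd S))
       \<le> ennreal ((f (fst x))^2) / snd x + ennreal (?A^2) / sum_mset (image_mset snd S)"
      using nn A0 by (intro titu) auto
    also have "\<dots> \<le> \<pi> x + sum_mset (image_mset \<pi> S)"
    proof (intro add_mono)
      show "ennreal ((f (fst x))^2) / snd x \<le> \<pi> x" using price by (cases x) auto
    qed (use add in auto)
    finally show ?case by simp
  qed
  have "\<pi> (sum_mset (image_mset fst S), sum_mset (image_mset snd S))
     = ennreal ((f (sum_mset (image_mset fst S)))^2) / sum_mset (image_mset snd S)" using price by simp
  also have "\<dots> \<le> ennreal ((sum_mset (image_mset (\<lambda>x. f (fst x)) S))^2) / sum_mset (image_mset snd S)"
    using fs nn by (intro divide_right_mono_ennreal ennreal_leI power_mono) auto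
  also note ts
  finally show ?case .
next
  case (scalar q v c)
  show ?case
  proof (cases "c = 0")
    case True
    have f0: "f 0 = 0" using hom[rule_format, of 0 0] by simp
    thus ?thesis using True price by simp
  next
    case False
    have "\<pi> (c *\<^sub>R q, ennreal (c\<^sup>2) * v) = ennreal ((f q)^2) * ennreal (c^2) / (v * ennreal (c\<^sup>2))"
      using price hom by (simp add: power_mult_distrib ennreal_mult' mult.commute)
    also have "\<dots> = \<pi> (q, v)" using price False by (subst divide_mult_eq) auto
    finally show ?thesis by simp
  qed
next
  case (relax v v' q)
  thus ?case using price by (simp add: div_anti)
next
  case (trans ps Q)
  have key: "sum_mset (image_mset \<pi> (mset (map snd ps))) \<le> sum_mset (image_mset \<pi> (sum_list (map fst ps)))"
    using trans.IH(1)
  proof (induction ps)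
    case Nil thus ?case by simp
  next
    case (Cons p ps)
    thus ?case by (auto intro: add_mono)
  qed
  show ?case using trans.IH(2) key by (rule order.trans)
qed

theorem theorem1:
  fixes \<pi> :: "'n::finite query \<Rightarrow> ennreal" and f :: "real ^ 'n \<Rightarrow> real"
  assumes f_nonneg: "\<forall>q. f q \<ge> 0"
    and price: "\<forall>q v. \<pi> (q, v) = ennreal ((f q)\<^sup>2) / v"
  shows "arbitrage_free \<pi> \<longleftrightarrow>
           ((\<forall>c q. f (c *\<^sub>R q) = \<bar>c\<bar> * f q) \<and>
            (\<forall>q1 q2. f (q1 + q2) \<le> f q1 + f q2))"
proof
  assume R: "(\<forall>c q. f (c *\<^sub>R q) = \<bar>c\<bar> * f q) \<and> (\<forall>q1 q2. f (q1 + q2) \<le> f q1 + f q2)"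
  show "arbitrage_free \<pi>" unfolding arbitrage_free_def
    using backward[OF f_nonneg price] R by blast
next
  assume AF: "arbitrage_free \<pi>"
  have af: "\<pi> Q \<le> sum_mset (image_mset \<pi> M)" if "M \<noteq> {#}" "determines M Q" for M Q
    using AF that unfolding arbitrage_free_def by blast
  have sc: "ennreal ((f (c *\<^sub>R q))^2) / ennreal (c^2) \<le> ennreal ((f q)^2)" for c q
  proof -
    have "determines {#(q, 1)#} (c *\<^sub>R q, ennreal (c\<^sup>2) * 1)" by (rule determines.scalar)
    from af[OF _ this] show ?thesis using price by (simp add: divide_ennreal_def[of _ 1])
  qed
  have f0: "f 0 = 0"
  proof (rule ccontr)
    assume h: "f 0 \<noteq> 0"
    have e: "ennreal (0^2) = 0" by simp
    have "ennreal ((f 0)^2) / 0 \<le> ennreal ((f 0)^2)" using sc[of 0 0] unfolding e by simp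
    moreover have "ennreal ((f 0)^2) \<noteq> 0" using h f_nonneg by simp
    ultimately have "top \<le> ennreal ((f 0)^2)" unfolding ennreal_divide_zero by presburger
    thus False by (simp add: top_unique)
  qed
  have le: "f (c *\<^sub>R q) \<le> \<bar>c\<bar> * f q" if c: "c \<noteq> 0" for c q
  proof -
    have c2: "c^2 > 0" using c by simp
    have eq: "ennreal ((f (c *\<^sub>R q))^2) / ennreal (c^2) = ennreal ((f (c *\<^sub>R q))^2 / c^2)"
      by (rule divide_ennreal) (simp, rule c2)
    have "ennreal ((f (c *\<^sub>R q))^2 / c^2) \<le> ennreal ((f q)^2)" using sc[of c q] unfolding eq .
    hence "(f (c *\<^sub>R q))^2 / c^2 \<le> (f q)^2" by (subst (asm) ennreal_le_iff) auto
    hence "(f (c *\<^sub>R q))^2 \<le> (f q)^2 * c^2" by (simp only: pos_divide_le_eq[OF c2])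
    also have "\<dots> = (\<bar>c\<bar> * f q)^2" by (simp add: power_mult_distrib)
    finally have "(f (c *\<^sub>R q))^2 \<le> (\<bar>c\<bar> * f q)^2" .
    thus ?thesis by (rule power2_le_imp_le) (use f_nonneg in auto)
  qed
  have hom: "f (c *\<^sub>R q) = \<bar>c\<bar> * f q" for c q
  proof (cases "c = 0")
    case True thus ?thesis using f0 by simp
  next
    case False
    have "f q = f ((1/c) *\<^sub>R (c *\<^sub>R q))" using False by simp
    also have "\<dots> \<le> \<bar>1/c\<bar> * f (c *\<^sub>R q)" using False by (intro le) auto
    finally have "\<bar>c\<bar> * f q \<le> f (c *\<^sub>R q)" using False by (simp add: field_simps)
    thus ?thesis using le[OF False, of q] by simp
  qed
  have tri: "f (q1 + q2) \<le> f q1 + f q2" for q1 q2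
  proof -
    have pi_self: "\<pi> (q, ennreal (f q)) = ennreal (f q)" for q
    proof (cases "f q = 0")
      case True thus ?thesis using price by (simp add: ennreal_divide_zero)
    next
      case False
      hence "f q > 0" using f_nonneg by (simp add: less_le)
      thus ?thesis using price by (simp add: divide_ennreal power2_eq_square)
    qed
    let ?M = "{#(q1, ennreal (f q1)), (q2, ennreal (f q2))#}"
    have "determines ?M (q1 + q2, ennreal (f q1) + ennreal (f q2))"
      using determines.summation[of ?M] by simp
    from af[OF _ this] have
      "\<pi> (q1 + q2, ennreal (f q1) + ennreal (f q2)) \<le> \<pi> (q1, ennreal (f q1)) + \<pi> (q2, ennreal (f q2))"
      by simp
    moreover have "ennreal (f q1) + ennreal (f q2) = ennreal (f q1 + f q2)"
      using f_nonneg by (simp add: ennreal_plus)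
    ultimately have
      "ennreal ((f (q1+q2))^2) / ennreal (f q1 + f q2) \<le> ennreal (f q1 + f q2)"
      using price pi_self by metis
    show ?thesis
    proof (cases "f q1 + f q2 = 0")
      case True
      with \<open>ennreal ((f (q1+q2))^2) / ennreal (f q1 + f q2) \<le> _\<close>
      have "f (q1+q2) = 0" by (simp add: ennreal_divide_zero split: if_splits)
      thus ?thesis using True by simp
    next
      case False
      hence p: "f q1 + f q2 > 0" using f_nonneg by (simp add: add_nonneg_eq_0_iff less_le)
      with \<open>ennreal ((f (q1+q2))^2) / ennreal (f q1 + f q2) \<le> _\<close>
      have "(f (q1+q2))^2 / (f q1 + f q2) \<le> f q1 + f q2"
        by (simp add: divide_ennreal ennreal_le_iff)
      hence "(f (q1+q2))^2 \<le> (f q1 + f q2)^2" using p by (simp add: pos_divide_le_eq power2_eq_square)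
      thus ?thesis by (rule power2_le_imp_le) (use f_nonneg in auto)
    qed
  qed
  show "(\<forall>c q. f (c *\<^sub>R q) = \<bar>c\<bar> * f q) \<and> (\<forall>q1 q2. f (q1 + q2) \<le> f q1 + f q2)"
    using hom tri by blast
qed

end
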